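(* Let $p\in\{3,4,\dots\}$, $a\ge0$, $b>0$ satisfy either ($a>0$ and $b\in[p/2-1,p/2]$) or ($a=0$ and $b\in[p/2-1,p/2)$). There exists a constant $c\in(0,\infty)$ (possibly depending on $p,a,b$) such that $\frac{w_{k-1}(n)}{w_{k-1}(n+1)}\le c$ for all $n\in\mathbb{Z}^+$ and all $k\in\{1,2,3\}$.
   Context: $\mathbb{Z}^+=\{0,1,2,\dots\}$; $g_0(z)=(a+z)^{-b}$; for $n\in\mathbb{Z}^+$ and $k\in\{0,1,2,3\}$, $w_k(n)=\int_0^\infty\frac{g_0(z)(z/2)^{n+p/2+k-1}e^{-z/2}}{2\Gamma(n+p/2)}dz$. *)

theory Defs
  imports "HOL-Analysis.Analysis"
begin

definition g0 :: "real \<Rightarrow> real \<Rightarrow> real \<Rightarrow> real" where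
  "g0 a b z = (a + z) powr (- b)"

definition w :: "nat \<Rightarrow> real \<Rightarrow> real \<Rightarrow> nat \<Rightarrow> nat \<Rightarrow> real" where
  "w p a b k n =
     (LINT z:{0<..}|lborel.
        g0 a b z * (z / 2) powr (real n + real p / 2 + real k - 1) * exp (- z / 2)
        / (2 * Gamma (real n + real p / 2)))"

end

theory Submission
  imports Defs "HOL-Real_Asymp.Real_Asymp"
begin

definition Fn :: "real \<Rightarrow> real \<Rightarrow> real \<Rightarrow> real \<Rightarrow> real" where
  "Fn a b e z = g0 a b z * (z / 2) powr e * exp (- z / 2)"

lemma Fn_meas[measurable]: "Fn a b e \<in> borel_measurable borel"
  unfolding Fn_def g0_def by measurable

lemma Fn_nonneg: "Fn a b e z \<ge> 0"
  unfolding Fn_def g0_def by simp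

lemma lim_top: "((\<lambda>z::real. (z/2) powr c * exp (- z / 2)) \<longlongrightarrow> 0) at_top"
  by real_asymp

lemma deriv:
  assumes "a \<ge> 0" "z > 0"
  shows "((\<lambda>z. g0 a b z * (z / 2) powr (e+1) * exp (- z / 2)) has_vector_derivative
     ((e+1)/2 * Fn a b e z - Fn a b (e+1) z / 2 - b * Fn a b (e+1) z / (a+z))) (at z)"
proof -
  have az: "a + z > 0" using assms by simp
  have D: "((\<lambda>z. (a+z) powr (-b) * (z / 2) powr (e+1) * exp (- z / 2)) has_real_derivative
     ((-b) * (a+z) powr (-b - 1) * (z / 2) powr (e+1) * exp (- z / 2)
      + (a+z) powr (-b) * ((e+1) * (z/2) powr e * (1/2)) * exp (- z / 2)
      + (a+z) powr (-b) * (z / 2) powr (e+1) * (exp (- z / 2) * (-1/2)))) (at z)"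
    using assms az
    by (auto intro!: derivative_eq_intros simp: field_simps)
  have p1: "(a+z) powr (-b - 1) = (a+z) powr (-b) / (a+z)"
    using az by (simp add: powr_diff)
  have p2: "(z/2) powr (e+1) = (z/2) * (z/2) powr e"
    using assms by (simp add: powr_add)
  have eq: "(-b) * (a+z) powr (-b - 1) * (z / 2) powr (e+1) * exp (- z / 2)
      + (a+z) powr (-b) * ((e+1) * (z/2) powr e * (1/2)) * exp (- z / 2)
      + (a+z) powr (-b) * (z / 2) powr (e+1) * (exp (- z / 2) * (-1/2))
     = (e+1)/2 * Fn a b e z - Fn a b (e+1) z / 2 - b * Fn a b (e+1) z / (a+z)"
    unfolding Fn_def g0_def p1 p2 using az by (simp add: field_simps)
  show ?thesis using D unfolding eq has_real_derivative_iff_has_vector_derivative g0_def by simp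
qed

lemma lim_zero: assumes "c > 0" shows "((\<lambda>z::real. (z/2) powr c) \<longlongrightarrow> 0) (at_right 0)"
  using assms by real_asymp

lemma Fn_succ: "z > 0 \<Longrightarrow> Fn a b (e+1) z = (z/2) * Fn a b e z"
  unfolding Fn_def by (simp add: powr_add)

lemma key:
  assumes a: "a \<ge> 0" and b: "b > 0" and e: "e + 1 - b > 0"
  and I0: "set_integrable lborel {0<..} (Fn a b e)"
  and I1: "set_integrable lborel {0<..} (Fn a b (e+1))"
  shows "(e+1-b) * (LINT z:{0<..}|lborel. Fn a b e z) \<le> (LINT z:{0<..}|lborel. Fn a b (e+1) z)"
proof -
  define Q where "Q z = b * Fn a b (e+1) z / (a+z)" for z
  define h where "h z = g0 a b z * (z / 2) powr (e+1) * exp (- z / 2)" for z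
  define f where "f z = (e+1)/2 * Fn a b e z - Fn a b (e+1) z / 2 - Q z" for z
  have Qm: "set_borel_measurable lborel {0<..} Q" 
    unfolding Q_def set_borel_measurable_def by measurable
  have Qle: "0 \<le> Q x \<and> Q x \<le> b/2 * Fn a b e x" if x: "x > 0" for x
  proof -
    have ax: "a + x > 0" using a x by simp
    have "Q x = b * ((x/2)/(a+x)) * Fn a b e x" unfolding Q_def Fn_succ[OF x] by simp
    moreover have "(x/2)/(a+x) \<le> 1/2" using ax a by (simp add: divide_simps)
    moreover have "(x/2)/(a+x) \<ge> 0" using ax x by simp
    moreover have "\<And>r F. 0 \<le> r \<Longrightarrow> r \<le> 1/2 \<Longrightarrow> 0 \<le> F \<Longrightarrow>
        0 \<le> b * r * F \<and> b * r * F \<le> b/2 * F"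
    proof -
      fix r F :: real assume r: "0 \<le> r" "r \<le> 1/2" and F: "0 \<le> F"
      have "r * F \<le> 1/2 * F" using r F by (intro mult_right_mono) auto
      then show "0 \<le> b * r * F \<and> b * r * F \<le> b/2 * F"
        using b r F mult_left_mono[of "r*F" "1/2*F" b] by auto
    qed
    ultimately show ?thesis using Fn_nonneg[of a b e x] by metis
  qed
  have QI: "set_integrable lborel {0<..} Q"
    apply (rule set_integrable_bound[OF set_integrable_mult_right[OF I0, of "b/2"] Qm])
    using Qle Fn_nonneg b by (auto intro!: AE_I2 simp: abs_mult)
  have fI: "set_integrable lborel {0<..} f"
    unfolding f_def using I0 I1 QI by (intro set_integral_diff set_integrable_mult_right set_integrable_divide) auto
  have intf: "(LINT z:{0<..}|lborel. f z) = (e+1)/2 * (LINT z:{0<..}|lborel. Fn a b e z)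
      - (LINT z:{0<..}|lborel. Fn a b (e+1) z) / 2 - (LINT z:{0<..}|lborel. Q z)"
  proof -
    have A: "set_integrable lborel {0<..} (\<lambda>z. (e+1)/2 * Fn a b e z)" using I0 by simp
    have B: "set_integrable lborel {0<..} (\<lambda>z. Fn a b (e+1) z / 2)" using I1 by (rule set_integrable_divide)
    have "(LINT z:{0<..}|lborel. f z) = (LINT z:{0<..}|lborel. (e+1)/2 * Fn a b e z - Fn a b (e+1) z / 2)
        - (LINT z:{0<..}|lborel. Q z)"
      unfolding f_def by (rule set_integral_diff(2)[OF set_integral_diff(1)[OF A B] QI])
    also have "(LINT z:{0<..}|lborel. (e+1)/2 * Fn a b e z - Fn a b (e+1) z / 2) =
       (LINT z:{0<..}|lborel. (e+1)/2 * Fn a b e z) - (LINT z:{0<..}|lborel. Fn a b (e+1) z / 2)"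
      by (rule set_integral_diff(2)[OF A B])
    finally show ?thesis by simp
  qed
  have FTC: "(LBINT x=ereal 0..\<infinity>. f x) = 0 - 0"
  proof (rule interval_integral_FTC_integrable[where F = h])
    show "ereal 0 < \<infinity>" by simp
    show "(h has_vector_derivative f x) (at x)" if "ereal 0 < ereal x" "ereal x < \<infinity>" for x
      using deriv[OF a, of x b e] that unfolding h_def f_def Q_def by simp
    show "isCont f x" if "ereal 0 < ereal x" "ereal x < \<infinity>" for x
      using that a unfolding f_def Q_def Fn_def g0_def by (auto intro!: continuous_intros)
    show "set_integrable lborel (einterval (ereal 0) \<infinity>) f" using fI by simp
    have "(h \<longlongrightarrow> 0) (at_right 0)"
    proof (rule tendsto_sandwich[of "\<lambda>_. 0" h _ "\<lambda>z. (z/2) powr (e+1-b)"])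
      show "\<forall>\<^sub>F n in at_right 0. 0 \<le> h n" unfolding h_def g0_def by simp
      show "\<forall>\<^sub>F n in at_right 0. h n \<le> (n/2) powr (e+1-b)"
        using eventually_at_right_less[of 0]
      proof (rule eventually_mono)
        fix z :: real assume z: "0 < z"
        have "(a+z) powr (-b) \<le> z powr (-b)" using z a b by (intro powr_mono2') auto
        also have "z powr (-b) = 2 powr (-b) * (z/2) powr (-b)"
          by (subst powr_mult[symmetric]) auto
        also have "\<dots> \<le> (z/2) powr (-b)" using b z by (intro mult_left_le_one_le) (auto simp: powr_le_one_le powr_minus_divide ge_one_powr_ge_zero)
        finally have 1: "(a+z) powr (-b) \<le> (z/2) powr (-b)" .
        have "h z \<le> (a+z) powr (-b) * (z / 2) powr (e+1)" unfolding h_def g0_def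
          using z by (intro mult_left_le) auto
        also have "\<dots> \<le> (z/2) powr (-b) * (z / 2) powr (e+1)" using 1 by (intro mult_right_mono) auto
        also have "\<dots> = (z/2) powr (e+1-b)" using z by (simp add: powr_add[symmetric])
        finally show "h z \<le> (z/2) powr (e+1-b)" .
      qed
      show "((\<lambda>_. 0) \<longlongrightarrow> (0::real)) (at_right 0)" by simp
      show "((\<lambda>z. (z/2) powr (e+1-b)) \<longlongrightarrow> 0) (at_right 0)" using lim_zero e by simp
    qed
    then show "((h \<circ> real_of_ereal) \<longlongrightarrow> 0) (at_right (ereal 0))"
      by (metis ereal_tendsto_simps1(2) zero_ereal_def)
    have "(h \<longlongrightarrow> 0) at_top"
    proof (rule tendsto_sandwich[of "\<lambda>_. 0" h _ "\<lambda>z. (z/2) powr (e+1) * exp (- z / 2)"])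
      show "\<forall>\<^sub>F n in at_top. 0 \<le> h n" unfolding h_def g0_def by simp
      show "\<forall>\<^sub>F n in at_top. h n \<le> (n/2) powr (e+1) * exp (- n / 2)"
        using eventually_ge_at_top[of 1]
      proof (rule eventually_mono)
        fix z :: real assume z: "1 \<le> z"
        have "1 \<le> (a+z) powr b" using z a b by (intro ge_one_powr_ge_zero) auto
        then have "(a+z) powr (-b) \<le> 1" by (simp add: powr_minus_divide divide_le_eq)
        then show "h z \<le> (z/2) powr (e+1) * exp (- z / 2)" unfolding h_def g0_def
          using mult_left_le_one_le[of "(z/2) powr (e+1) * exp (- z / 2)" "(a+z) powr (-b)"]
          by (simp add: mult.assoc)
      qed
      show "((\<lambda>_. 0) \<longlongrightarrow> (0::real)) at_top" by simp
      show "((\<lambda>z. (z/2) powr (e+1) * exp (- z / 2)) \<longlongrightarrow> 0) at_top" by (rule lim_top)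
    qed
    then show "((h \<circ> real_of_ereal) \<longlongrightarrow> 0) (at_left \<infinity>)"
      by (simp add: ereal_tendsto_simps1)
  qed
  then have "(LINT z:{0<..}|lborel. f z) = 0"
    by (simp add: interval_lebesgue_integral_def)
  moreover have "(LINT z:{0<..}|lborel. Q z) \<le> (LINT z:{0<..}|lborel. b/2 * Fn a b e z)"
    using Qle by (intro set_integral_mono QI set_integrable_mult_right I0) auto
  ultimately show ?thesis using intf by (simp add: algebra_simps)
qed


lemma SI_nonneg: "0 \<le> (LINT z:{0<..}|lborel. Fn a b e z)"
  unfolding set_lebesgue_integral_def
  by (intro Bochner_Integration.integral_nonneg) (simp add: Fn_nonneg indicator_def)

lemma SI_nonint: "\<not> set_integrable lborel {0<..} (Fn a b e) \<Longrightarrow> (LINT z:{0<..}|lborel. Fn a b e z) = 0"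
  unfolding set_lebesgue_integral_def set_integrable_def by (rule not_integrable_integral_eq)

lemma w_eq: "w p a b j n = (LINT z:{0<..}|lborel. Fn a b (real n + real p / 2 + real j - 1) z) / (2 * Gamma (real n + real p / 2))"
  unfolding w_def Fn_def by simp

lemma ratio:
  assumes a: "a \<ge> 0" and b: "b > 0" "b \<le> real p / 2" and n: "n \<ge> 1"
  shows "w p a b j n / w p a b j (n + 1) \<le> 1 + b"
proof -
  define m where "m = real n + real p / 2"
  define e where "e = real n + real p / 2 + real j - 1"
  define A where "A = (LINT z:{0<..}|lborel. Fn a b e z)"
  define B where "B = (LINT z:{0<..}|lborel. Fn a b (e+1) z)"
  have m1: "m - b \<ge> 1" using n b unfolding m_def by simp
  have mpos: "m > 0" using m1 b by simp
  have G: "Gamma (m + 1) = m * Gamma m"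
    using mpos by (intro Gamma_plus1) (auto dest: nonpos_Ints_nonpos)
  have Gp: "Gamma m > 0" using mpos by simp
  have w1: "w p a b j n = A / (2 * Gamma m)" unfolding w_eq A_def e_def m_def by simp
  have w2: "w p a b j (n+1) = B / (2 * (m * Gamma m))"
    unfolding w_eq B_def G[symmetric] unfolding e_def m_def by (simp add: algebra_simps)
  have rat: "w p a b j n / w p a b j (n + 1) = m * A / B"
    unfolding w1 w2 using Gp mpos less_irrefl[of "Gamma m"] by (cases "B = 0") (simp_all add: field_simps del: Gamma_real_pos)
  have A0: "A \<ge> 0" "B \<ge> 0" unfolding A_def B_def by (rule SI_nonneg)+
  have main: "m * A \<le> (1 + b) * B" if Bn: "B \<noteq> 0"
  proof (cases "set_integrable lborel {0<..} (Fn a b e) \<and> set_integrable lborel {0<..} (Fn a b (e+1))")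
    case True
    have eb: "e + 1 - b \<ge> m - b" unfolding e_def m_def by simp
    have k: "(e+1-b) * A \<le> B" unfolding A_def B_def
      using key[OF a b(1) _ conjunct1[OF True] conjunct2[OF True]] eb m1 by simp
    have "m * A \<le> (1+b) * (m - b) * A"
    proof (rule mult_right_mono[OF _ A0(1)])
      have "(1+b) * (m-b) = m + b * (m - b - 1)" by (simp add: algebra_simps)
      moreover have "b * (m - b - 1) \<ge> 0" using b m1 by simp
      ultimately show "m \<le> (1+b) * (m - b)" by simp
    qed
    also have "\<dots> \<le> (1+b) * ((e+1-b) * A)"
      unfolding mult.assoc using eb b A0 by (intro mult_left_mono mult_right_mono) auto
    also have "\<dots> \<le> (1+b) * B" using k b by (intro mult_left_mono) auto
    finally show ?thesis .
  next
    case False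
    then have "A = 0 \<or> B = 0" unfolding A_def B_def using SI_nonint by blast
    then show ?thesis using A0 b mpos Bn by auto
  qed
  show ?thesis
  proof (cases "B = 0")
    case True then show ?thesis unfolding rat using b by simp
  next
    case False
    then have "B > 0" using A0 by simp
    then show ?thesis unfolding rat using main[OF False] by (simp add: divide_le_eq mult.commute)
  qed
qed


theorem propositionA5:
  fixes p :: nat and a b :: real
  assumes "p \<ge> 3" and "a \<ge> 0" and "b > 0"
    and "(a > 0 \<and> real p / 2 - 1 \<le> b \<and> b \<le> real p / 2) \<or>
         (a = 0 \<and> real p / 2 - 1 \<le> b \<and> b < real p / 2)"
  shows "\<exists>c::real. 0 < c \<and>
           (\<forall>n::nat. \<forall>k::nat. k \<in> {1, 2, 3} \<longrightarrow>
              w p a b (k - 1) n / w p a b (k - 1) (n + 1) \<le> c)"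
proof -
  have bp: "b \<le> real p / 2" using assms(4) by auto
  define r where "r j = w p a b j 0 / w p a b j 1" for j
  define c where "c = 1 + b + \<bar>r 0\<bar> + \<bar>r 1\<bar> + \<bar>r 2\<bar>"
  have c1: "1 + b \<le> c" unfolding c_def by simp
  have cr: "r j \<le> c" if "j \<in> {0,1,2}" for j
    using that assms(3) unfolding c_def by auto
  show ?thesis
  proof (intro exI[of _ c] conjI allI impI)
    show "0 < c" using c1 assms(3) by simp
    fix n k :: nat assume k: "k \<in> {1,2,3}"
    show "w p a b (k - 1) n / w p a b (k - 1) (n + 1) \<le> c"
    proof (cases "n = 0")
      case True
      have "k - 1 \<in> {0,1,2}" using k by auto
      then show ?thesis using cr[of "k-1"] True unfolding r_def by simp
    next
      case False
      then show ?thesis using ratio[OF assms(2,3) bp, of n "k-1"] c1 by simp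
    qed
  qed
qed

end
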